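(* For every integer $m\geq 1$, the graph $\mathcal{G}^2_{4m+1}$ is transmission irregular.
   Context: Let $G_2$ be the graph with vertices $a,b,c,d,e,f,g,h$ and edges $ab, ae, af, bc, bf, bg, cd, cg, dh, ef, fg, gh$. For an integer $n\ge 3$, $\mathcal{G}^2_n$ is obtained from $G_2$ by adding a new path from $e$ to $h$ with $n$ new internal vertices (a path $e,x_1,\dots,x_n,h$ of length $n+1$). The transmission of a vertex $u$ in a connected graph $G$ is $Tr_G(u)=\sum_{v}d_G(u,v)$; a graph is transmission irregular if no two of its vertices have equal transmission. *)

theory Defs
  imports Main
begin

definition walk :: "'a set \<Rightarrow> ('a \<Rightarrow> 'a \<Rightarrow> bool) \<Rightarrow> 'a list \<Rightarrow> bool" where
  "walk V E p \<longleftrightarrow> p \<noteq> [] \<and> set p \<subseteq> V \<and> (\<forall>i. Suc i < length p \<longrightarrow> E (p ! i) (p ! Suc i))"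

definition gdist :: "'a set \<Rightarrow> ('a \<Rightarrow> 'a \<Rightarrow> bool) \<Rightarrow> 'a \<Rightarrow> 'a \<Rightarrow> nat" where
  "gdist V E u v = (LEAST k. \<exists>p. walk V E p \<and> hd p = u \<and> last p = v \<and> length p = Suc k)"

definition transmission :: "'a set \<Rightarrow> ('a \<Rightarrow> 'a \<Rightarrow> bool) \<Rightarrow> 'a \<Rightarrow> nat" where
  "transmission V E u = (\<Sum>v\<in>V. gdist V E u v)"

definition transmission_irregular :: "'a set \<Rightarrow> ('a \<Rightarrow> 'a \<Rightarrow> bool) \<Rightarrow> bool" where
  "transmission_irregular V E \<longleftrightarrow> inj_on (transmission V E) V"

(* Encoding of G_2: a=0, b=1, c=2, d=3, e=4, f=5, g=6, h=7;
   new path vertices x_1,...,x_n are 8,...,n+7. *)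
definition G2_edges :: "nat set set" where
  "G2_edges = {{0,1},{0,4},{0,5},{1,2},{1,5},{1,6},{2,3},{2,6},{3,7},{4,5},{5,6},{6,7}}"

definition calG2_edges :: "nat \<Rightarrow> nat set set" where
  "calG2_edges n = G2_edges \<union> {{4, 8}} \<union> {{i, Suc i} | i. 8 \<le> i \<and> i < n + 7} \<union> {{n + 7, 7}}"

definition calG2_V :: "nat \<Rightarrow> nat set" where
  "calG2_V n = {0..<n + 8}"

definition calG2_adj :: "nat \<Rightarrow> nat \<Rightarrow> nat \<Rightarrow> bool" where
  "calG2_adj n u v \<longleftrightarrow> u \<noteq> v \<and> {u, v} \<in> calG2_edges n"

end

theory Submission
  imports Defs
begin


definition rr :: "nat \<Rightarrow> nat \<Rightarrow> nat \<Rightarrow> nat" where "rr N p q = (if p \<le> q then q - p else N + q - p)"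
definition hh :: "nat \<Rightarrow> nat \<Rightarrow> nat" where "hh N r = min r (N - r)"
definition cdN :: "nat \<Rightarrow> nat \<Rightarrow> nat \<Rightarrow> nat" where "cdN N p q = hh N (rr N p q)"
definition nxN :: "nat \<Rightarrow> nat \<Rightarrow> nat" where "nxN N q = (if Suc q = N then 0 else Suc q)"
definition pvN :: "nat \<Rightarrow> nat \<Rightarrow> nat" where "pvN N q = (if q = 0 then N - 1 else q - 1)"

lemma rr_lt: "p < N \<Longrightarrow> q < N \<Longrightarrow> rr N p q < N" unfolding rr_def by auto
lemma rr_nx: "p < N \<Longrightarrow> q < N \<Longrightarrow> rr N p (nxN N q) = nxN N (rr N p q)"
  unfolding rr_def nxN_def by auto
lemma rr_pv: "p < N \<Longrightarrow> q < N \<Longrightarrow> rr N p (pvN N q) = pvN N (rr N p q)"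
  unfolding rr_def pvN_def by auto
lemma rr_zero: "p < N \<Longrightarrow> q < N \<Longrightarrow> rr N p q = 0 \<longleftrightarrow> p = q"
  unfolding rr_def by auto
lemma rr_sym: "p < N \<Longrightarrow> q < N \<Longrightarrow> rr N q p = (if p = q then 0 else N - rr N p q)"
  unfolding rr_def by auto
lemma hh_nx: "r < N \<Longrightarrow> hh N (nxN N r) \<le> hh N r + 1 \<and> hh N r \<le> hh N (nxN N r) + 1"
  unfolding hh_def nxN_def by auto
lemma hh_desc: "0 < r \<Longrightarrow> r < N \<Longrightarrow> hh N (nxN N r) < hh N r \<or> hh N (pvN N r) < hh N r"
  unfolding hh_def nxN_def pvN_def by auto
lemma hh_zero: "r < N \<Longrightarrow> hh N r = 0 \<Longrightarrow> r = 0"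
  unfolding hh_def by auto
lemma hh_sym: "r < N \<Longrightarrow> 0 < r \<Longrightarrow> hh N (N - r) = hh N r"
  unfolding hh_def by auto

lemma cd_self: "cdN N p p = 0" unfolding cdN_def rr_def hh_def by simp
lemma cd_sym: "p < N \<Longrightarrow> q < N \<Longrightarrow> cdN N p q = cdN N q p"
  unfolding cdN_def using rr_sym[of p N q] rr_zero[of p N q] rr_lt[of p N q] hh_sym[of "rr N p q" N]
  by (auto simp: cd_self)
lemma cd_zero: "p < N \<Longrightarrow> q < N \<Longrightarrow> cdN N p q = 0 \<Longrightarrow> p = q"
  unfolding cdN_def using hh_zero[OF rr_lt[of p N q]] rr_zero[of p N q] by simp
lemma cd_lip: "p < N \<Longrightarrow> q < N \<Longrightarrow> cdN N p (nxN N q) \<le> cdN N p q + 1 \<and> cdN N p q \<le> cdN N p (nxN N q) + 1"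
  unfolding cdN_def using rr_nx[of p N q] hh_nx[OF rr_lt[of p N q]] by simp
lemma cd_desc: "p < N \<Longrightarrow> q < N \<Longrightarrow> p \<noteq> q \<Longrightarrow> cdN N p (nxN N q) < cdN N p q \<or> cdN N p (pvN N q) < cdN N p q"
  unfolding cdN_def using rr_nx[of p N q] rr_pv[of p N q] hh_desc[OF _ rr_lt[of p N q]] rr_zero[of p N q] by simp
lemma nx_lt: "q < N \<Longrightarrow> nxN N q < N" unfolding nxN_def by auto
lemma pv_lt: "q < N \<Longrightarrow> pvN N q < N" unfolding pvN_def by auto
lemma nx_pv: "q < N \<Longrightarrow> nxN N (pvN N q) = q" unfolding nxN_def pvN_def by auto
lemma cd_lip1: "p < N \<Longrightarrow> q < N \<Longrightarrow> cdN N (nxN N q) p \<le> cdN N q p + 1 \<and> cdN N q p \<le> cdN N (nxN N q) p + 1"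
  using cd_lip[of p N q] cd_sym[of p N q] cd_sym[of p N "nxN N q"] nx_lt[of q N] by simp

lemma rr_nx1: "p < N \<Longrightarrow> q < N \<Longrightarrow> rr N (nxN N p) q = pvN N (rr N p q)"
  unfolding rr_def nxN_def pvN_def by auto

lemma sum_rr: assumes "p < N" shows "(\<Sum>q<N. f (rr N p q)) = (\<Sum>r<N. f r)"
  by (rule sum.reindex_bij_witness[where i = "\<lambda>r. if p + r < N then p + r else p + r - N" and j = "rr N p"])
     (use assms in \<open>auto simp: rr_def\<close>)

lemma sum_split_add: "(\<Sum>r<(a::nat)+b. f r) = (\<Sum>r<a. f r) + (\<Sum>j<b. f (a+j))"
  by (induction b) (auto simp: add.assoc)

lemma gauss1: "2 * (\<Sum>r<Suc K. r) = K * (K+1::nat)"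
  by (induction K) auto
lemma gauss2: "2 * (\<Sum>j<K. K - j) = K * (K+1::nat)"
proof (induction K)
  case 0 then show ?case by simp
next
  case (Suc K)
  have "(\<Sum>j<Suc K. Suc K - j) = (\<Sum>j<K. Suc K - j) + 1" by simp
  also have "(\<Sum>j<K. Suc K - j) = (\<Sum>j<K. (K - j) + 1)" by (rule sum.cong) auto
  also have "\<dots> = (\<Sum>j<K. K - j) + K" by (simp only: sum.distrib) simp
  finally show ?case using Suc by (simp add: algebra_simps)
qed
lemma gauss3: "2 * (\<Sum>r<Suc K. r - 1) = K * (K - 1::nat)"
proof (induction K)
  case 0 then show ?case by simp
next
  case (Suc K) then show ?case by (cases K) (auto simp: algebra_simps)
qed

lemma sum_hh: "(\<Sum>r<2*K+1. hh (2*K+1) r) = K * (K + 1)"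
proof -
  have NK: "{..<2*K+1} = {..<Suc K + K}" by simp
  have "(\<Sum>r<2*K+1. hh (2*K+1) r) = (\<Sum>r<Suc K. hh (2*K+1) r) + (\<Sum>j<K. hh (2*K+1) (Suc K + j))"
    unfolding NK by (rule sum_split_add)
  also have "(\<Sum>r<Suc K. hh (2*K+1) r) = (\<Sum>r<Suc K. r)"
    by (rule sum.cong) (auto simp: hh_def)
  also have "(\<Sum>j<K. hh (2*K+1) (Suc K + j)) = (\<Sum>j<K. K - j)"
    by (rule sum.cong) (auto simp: hh_def)
  finally show ?thesis using gauss1[of K] gauss2[of K] by simp
qed

lemma sum_hh2: "(\<Sum>r<2*K+1. min (hh (2*K+1) r) (hh (2*K+1) (pvN (2*K+1) r))) = K * K"
proof -
  let ?g = "\<lambda>r. min (hh (2*K+1) r) (hh (2*K+1) (pvN (2*K+1) r))"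
  have NK: "{..<2*K+1} = {..<Suc K + K}" by simp
  have "(\<Sum>r<2*K+1. ?g r) = (\<Sum>r<Suc K. ?g r) + (\<Sum>j<K. ?g (Suc K + j))"
    unfolding NK by (rule sum_split_add)
  also have "(\<Sum>r<Suc K. ?g r) = (\<Sum>r<Suc K. r - 1)"
    by (rule sum.cong) (auto simp: hh_def pvN_def)
  also have "(\<Sum>j<K. ?g (Suc K + j)) = (\<Sum>j<K. K - j)"
    by (rule sum.cong) (auto simp: hh_def pvN_def)
  finally have "2 * (\<Sum>r<2*K+1. ?g r) = K * (K - 1) + K * (K + 1)" using gauss3[of K] gauss2[of K] by simp
  also have "\<dots> = 2 * (K * K)" by (cases K) (auto simp: algebra_simps)
  finally show ?thesis by simp
qed


definition ed :: "nat \<Rightarrow> nat \<Rightarrow> nat \<Rightarrow> bool" where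
  "ed m u v \<longleftrightarrow> (u=0\<and>v=1) \<or> (u=0\<and>v=4) \<or> (u=0\<and>v=5) \<or> (u=1\<and>v=2) \<or> (u=1\<and>v=5) \<or> (u=1\<and>v=6)
     \<or> (u=2\<and>v=3) \<or> (u=2\<and>v=6) \<or> (u=3\<and>v=7) \<or> (u=4\<and>v=5) \<or> (u=5\<and>v=6) \<or> (u=6\<and>v=7)
     \<or> (u=4\<and>v=8) \<or> (8\<le>u \<and> u<4*m+8 \<and> v=Suc u) \<or> (u=4*m+8 \<and> v=7)"

lemma G2_cases: "{u,v} \<in> G2_edges \<Longrightarrow> ed m u v \<or> ed m v u"
  unfolding G2_edges_def insert_iff empty_iff doubleton_eq_iff
  by (elim disjE conjE) (simp_all add: ed_def)

lemma path_cases: "{u,v} \<in> {{i, Suc i} | i. 8 \<le> i \<and> i < 4*m+1 + 7} \<Longrightarrow> ed m u v \<or> ed m v u"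
proof -
  assume "{u,v} \<in> {{i, Suc i} | i. 8 \<le> i \<and> i < 4*m+1 + 7}"
  then obtain i where i: "{u,v} = {i, Suc i}" "8 \<le> i" "i < 4*m+8" by force
  have "ed m i (Suc i)" unfolding ed_def using i(2,3) by blast
  then show ?thesis using i(1) unfolding doubleton_eq_iff by auto
qed

lemma adjI1: "{x,y} \<in> G2_edges \<Longrightarrow> x \<noteq> y \<Longrightarrow> calG2_adj n x y"
  by (simp add: calG2_adj_def calG2_edges_def)
lemma adjI2: "8 \<le> x \<Longrightarrow> x < n+7 \<Longrightarrow> calG2_adj n x (Suc x)"
  unfolding calG2_adj_def calG2_edges_def by auto
lemma G2adj: "calG2_adj n 0 1" "calG2_adj n 0 4" "calG2_adj n 0 5" "calG2_adj n 1 2"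
  "calG2_adj n 1 5" "calG2_adj n 1 6" "calG2_adj n 2 3" "calG2_adj n 2 6"
  "calG2_adj n 3 7" "calG2_adj n 4 5" "calG2_adj n 5 6" "calG2_adj n 6 7"
  by (rule adjI1; simp add: G2_edges_def)+
lemma adjI3: "calG2_adj (4*m+1) (4*m+8) 7" "calG2_adj n 4 8"
  unfolding calG2_adj_def calG2_edges_def by (auto simp: algebra_simps)
lemma adj_sym: "calG2_adj n x y \<Longrightarrow> calG2_adj n y x"
  unfolding calG2_adj_def by (simp add: insert_commute)

lemma adj_to_ed: "calG2_adj (4*m+1) u v \<Longrightarrow> ed m u v \<or> ed m v u"
proof -
  assume "calG2_adj (4*m+1) u v"
  then have "{u,v} \<in> G2_edges \<or> {u,v} = {4,8} \<or>
      {u,v} \<in> {{i, Suc i} | i. 8 \<le> i \<and> i < 4*m+1 + 7} \<or> {u,v} = {4*m+1+7, 7}"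
    unfolding calG2_adj_def calG2_edges_def by blast
  then consider "{u,v} \<in> G2_edges" | "{u,v} = {4,8}" | "{u,v} \<in> {{i, Suc i} | i. 8 \<le> i \<and> i < 4*m+1 + 7}"
    | "{u,v} = {4*m+1+7, 7}" by blast
  then show "ed m u v \<or> ed m v u"
  proof cases
    case 1 then show ?thesis by (rule G2_cases)
  next
    case 2 then show ?thesis unfolding doubleton_eq_iff by (elim disjE conjE) (simp_all add: ed_def)
  next
    case 3 then show ?thesis by (rule path_cases)
  next
    case 4 then show ?thesis unfolding doubleton_eq_iff by (elim disjE conjE) (simp_all add: ed_def)
  qed
qed

lemma ed_to_adj: "ed m x y \<Longrightarrow> calG2_adj (4*m+1) x y"
  unfolding ed_def
  apply (elim disjE conjE)
  apply (simp_all only: G2adj adjI3)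
  apply (rule adjI2)
  apply simp_all
  done

lemma adj_iff: "calG2_adj (4*m+1) u v \<longleftrightarrow> ed m u v \<or> ed m v u"
  using adj_to_ed[of m u v] ed_to_adj[of m u v] ed_to_adj[of m v u] adj_sym[of "4*m+1" v u] by blast


lemma walk_snoc:
  assumes "walk V E p" "x \<in> V" "E (last p) x"
  shows "walk V E (p @ [x])"
  using assms unfolding walk_def
  apply (auto simp: nth_append last_conv_nth less_Suc_eq)
  subgoal for i by (subgoal_tac "i = length p - Suc 0") auto
  done

lemma walk_snocD:
  assumes w: "walk V E (p @ [x])" and ne: "p \<noteq> []"
  shows "walk V E p \<and> E (last p) x"
proof -
  have st: "set p \<subseteq> V" using w unfolding walk_def by auto
  have ed: "E ((p @ [x]) ! i) ((p @ [x]) ! Suc i)" if "Suc i < Suc (length p)" for i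
    using w that unfolding walk_def by simp
  have "E (p ! i) (p ! Suc i)" if "Suc i < length p" for i
  proof -
    have "E ((p @ [x]) ! i) ((p @ [x]) ! Suc i)" using ed[of i] that by simp
    moreover have "(p @ [x]) ! i = p ! i" "(p @ [x]) ! Suc i = p ! Suc i"
      using that by (simp_all add: nth_append)
    ultimately show ?thesis by simp
  qed
  then have "walk V E p" using st ne unfolding walk_def by blast
  moreover have "E (last p) x"
  proof -
    obtain j where j: "length p = Suc j" using ne by (cases p) auto
    have "E ((p @ [x]) ! j) ((p @ [x]) ! Suc j)" using ed[of j] j by simp
    moreover have "(p @ [x]) ! j = last p" using j ne by (simp add: nth_append last_conv_nth)
    moreover have "(p @ [x]) ! Suc j = x" using j by (simp add: nth_append)
    ultimately show ?thesis by simp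
  qed
  ultimately show ?thesis by blast
qed

lemma walk_lower:
  assumes lip: "\<And>x y. x\<in>V \<Longrightarrow> y\<in>V \<Longrightarrow> E x y \<Longrightarrow> D y \<le> D x + 1"
    and D0: "D u = 0"
  shows "walk V E p \<Longrightarrow> hd p = u \<Longrightarrow> D (last p) + 1 \<le> length p"
proof (induction p rule: rev_induct)
  case Nil then show ?case by (simp add: walk_def)
next
  case (snoc x xs)
  show ?case
  proof (cases "xs = []")
    case True then show ?thesis using snoc D0 by simp
  next
    case False
    from walk_snocD[OF snoc.prems(1) False] have w: "walk V E xs" and e: "E (last xs) x" by auto
    have "hd xs = u" using snoc.prems False by simp
    with snoc.IH w have "D (last xs) + 1 \<le> length xs" by simp
    moreover have "last xs \<in> V" "x \<in> V" using snoc.prems(1) False unfolding walk_def by auto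
    ultimately show ?thesis using lip[OF _ _ e] by simp
  qed
qed

lemma gdist_eqI:
  assumes uV: "u \<in> V" and vV: "v \<in> V" and D0: "D u = 0"
    and Dpos: "\<And>x. x\<in>V \<Longrightarrow> D x = 0 \<Longrightarrow> x = u"
    and lip: "\<And>x y. x\<in>V \<Longrightarrow> y\<in>V \<Longrightarrow> E x y \<Longrightarrow> D y \<le> D x + 1"
    and desc: "\<And>x. x\<in>V \<Longrightarrow> 0 < D x \<Longrightarrow> \<exists>y\<in>V. E y x \<and> D y < D x"
  shows "gdist V E u v = D v"
proof -
  have ex: "\<forall>x\<in>V. D x = k \<longrightarrow> (\<exists>p. walk V E p \<and> hd p = u \<and> last p = x \<and> length p = Suc k)" for k
  proof (induction k)
    case 0
    show ?case
    proof (intro ballI impI)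
      fix x assume "x \<in> V" "D x = 0"
      then have "x = u" using Dpos by blast
      then show "\<exists>p. walk V E p \<and> hd p = u \<and> last p = x \<and> length p = Suc 0"
        using uV by (intro exI[of _ "[u]"]) (simp add: walk_def)
    qed
  next
    case (Suc k)
    show ?case
    proof (intro ballI impI)
      fix x assume xV: "x \<in> V" and Dx: "D x = Suc k"
      then obtain y where yV: "y \<in> V" and e: "E y x" and lt: "D y < D x" using desc by fastforce
      have "D x \<le> D y + 1" using lip[OF yV xV e] .
      then have "D y = k" using lt Dx by simp
      then obtain p where p: "walk V E p" "hd p = u" "last p = y" "length p = Suc k"
        using Suc.IH yV by blast
      have "p \<noteq> []" using p(4) by auto
      then show "\<exists>p. walk V E p \<and> hd p = u \<and> last p = x \<and> length p = Suc (Suc k)"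
        using p e xV by (intro exI[of _ "p @ [x]"]) (simp add: walk_snoc)
    qed
  qed
  show ?thesis unfolding gdist_def
  proof (rule Least_equality)
    show "\<exists>p. walk V E p \<and> hd p = u \<and> last p = v \<and> length p = Suc (D v)"
      using ex vV by blast
  next
    fix k assume "\<exists>p. walk V E p \<and> hd p = u \<and> last p = v \<and> length p = Suc k"
    then obtain p where "walk V E p" "hd p = u" "last p = v" "length p = Suc k" by blast
    then show "D v \<le> k" using walk_lower[of V E D u, OF lip D0] by fastforce
  qed
qed


definition pos :: "nat \<Rightarrow> nat \<Rightarrow> nat" where
  "pos m v = (if v = 4 then 0 else if v = 5 then 4*m+4 else if v = 6 then 4*m+3 else if v = 7 then 4*m+2 else v - 7)"
definition vtx :: "nat \<Rightarrow> nat \<Rightarrow> nat" where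
  "vtx m q = (if q = 0 then 4 else if q \<le> 4*m+1 then q+7 else if q = 4*m+2 then 7 else if q = 4*m+3 then 6 else 5)"
definition at1 :: "nat \<Rightarrow> nat \<Rightarrow> nat" where
  "at1 m k = (if k = 0 then 0 else if k = 1 then 4*m+4 else if k = 2 then 4*m+3 else 4*m+2)"
definition at2 :: "nat \<Rightarrow> nat \<Rightarrow> nat" where
  "at2 m k = (if k = 0 then 4*m+4 else if k = 1 then 4*m+3 else if k = 2 then 4*m+3 else 4*m+2)"

lemma pos_lt: "4 \<le> v \<Longrightarrow> v < 4*m+9 \<Longrightarrow> pos m v < 4*m+5"
  unfolding pos_def by auto
lemma vtx_pos: "4 \<le> v \<Longrightarrow> v < 4*m+9 \<Longrightarrow> vtx m (pos m v) = v"
  unfolding pos_def vtx_def by auto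
lemma pos_vtx: "q < 4*m+5 \<Longrightarrow> pos m (vtx m q) = q"
  unfolding pos_def vtx_def by auto
lemma vtx_range: "q < 4*m+5 \<Longrightarrow> 4 \<le> vtx m q \<and> vtx m q < 4*m+9"
  unfolding vtx_def by auto
lemma at_lt: "at1 m k < 4*m+5" "at2 m k < 4*m+5" unfolding at1_def at2_def by auto

lemma adj_nx: "q < 4*m+5 \<Longrightarrow> ed m (vtx m q) (vtx m (nxN (4*m+5) q)) \<or> ed m (vtx m (nxN (4*m+5) q)) (vtx m q)"
  unfolding vtx_def nxN_def by (auto simp: ed_def)
lemma cyc_edge: "4 \<le> x \<Longrightarrow> 4 \<le> y \<Longrightarrow> x < 4*m+9 \<Longrightarrow> y < 4*m+9 \<Longrightarrow> ed m x y \<Longrightarrow>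
   pos m y = nxN (4*m+5) (pos m x) \<or> pos m x = nxN (4*m+5) (pos m y)"
  unfolding ed_def by (elim disjE conjE) (simp_all add: pos_def nxN_def, arith)
lemma off_edge: "x < 4 \<Longrightarrow> 4 \<le> y \<Longrightarrow> y < 4*m+9 \<Longrightarrow> ed m x y \<or> ed m y x \<Longrightarrow>
   pos m y = at1 m x \<or> pos m y = at2 m x"
  unfolding ed_def by (elim disjE conjE) (simp_all add: pos_def at1_def at2_def)
lemma off_adj: "k < 4 \<Longrightarrow> ed m k (vtx m (at1 m k)) \<or> ed m (vtx m (at1 m k)) k"
   "k < 4 \<Longrightarrow> ed m k (vtx m (at2 m k)) \<or> ed m (vtx m (at2 m k)) k"
  unfolding vtx_def at1_def at2_def by (auto simp: ed_def)
lemma offoff: "x < 4 \<Longrightarrow> y < 4 \<Longrightarrow> ed m x y \<Longrightarrow> y = Suc x"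
  unfolding ed_def by auto
lemma offoff_adj: "x < 3 \<Longrightarrow> ed m x (Suc x)"
  unfolding ed_def by auto
lemma at_rel: "at1 m k = at2 m k \<or> at1 m k = nxN (4*m+5) (at2 m k)"
  unfolding at1_def at2_def nxN_def by auto


definition off :: "nat \<Rightarrow> nat \<Rightarrow> nat \<Rightarrow> nat" where
  "off m k p = min (cdN (4*m+5) p (at1 m k)) (cdN (4*m+5) p (at2 m k)) + 1"
definition Dc :: "nat \<Rightarrow> nat \<Rightarrow> nat \<Rightarrow> nat" where
  "Dc m p v = (if v < 4 then off m v p else cdN (4*m+5) p (pos m v))"
definition Do :: "nat \<Rightarrow> nat \<Rightarrow> nat \<Rightarrow> nat" where
  "Do m k v = (if v < 4 then (if k \<le> v then v - k else k - v) else off m k (pos m v))"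
definition DD :: "nat \<Rightarrow> nat \<Rightarrow> nat \<Rightarrow> nat" where
  "DD m u v = (if u < 4 then Do m u v else Dc m (pos m u) v)"

lemma nx_vals: "nxN (4*m+5) (4*m+2) = 4*m+3" "nxN (4*m+5) (4*m+3) = 4*m+4" "nxN (4*m+5) (4*m+4) = 0"
  unfolding nxN_def by auto

lemma at_lip: "p < 4*m+5 \<Longrightarrow> cdN (4*m+5) p (at1 m k) \<le> cdN (4*m+5) p (at2 m k) + 1 \<and> cdN (4*m+5) p (at2 m k) \<le> cdN (4*m+5) p (at1 m k) + 1"
  using at_rel[of m k] cd_lip[of p "4*m+5" "at2 m k"] at_lt[of m k] by auto

lemma Dc_lip:
  assumes p: "p < 4*m+5" and x: "x < 4*m+9" and y: "y < 4*m+9" and e: "ed m x y"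
  shows "Dc m p y \<le> Dc m p x + 1 \<and> Dc m p x \<le> Dc m p y + 1"
proof (cases "x < 4")
  case True
  note xt = True
  show ?thesis
  proof (cases "y < 4")
    case True
    then have "y = Suc x" using offoff xt e by blast
    then have "x = 0 \<and> y = 1 \<or> x = 1 \<and> y = 2 \<or> x = 2 \<and> y = 3" using True by auto
    then show ?thesis
      using cd_lip[OF p, of "4*m+3"] cd_lip[OF p, of "4*m+4"] cd_lip[OF p, of "4*m+2"]
      unfolding Dc_def off_def at1_def at2_def nx_vals by auto
  next
    case False
    then have "pos m y = at1 m x \<or> pos m y = at2 m x" using off_edge[OF xt _ y] e by simp
    then show ?thesis using at_lip[OF p, of x] xt False unfolding Dc_def off_def by auto
  qed
next
  case False
  note xf = False
  show ?thesis
  proof (cases "y < 4")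
    case True
    then have "pos m x = at1 m y \<or> pos m x = at2 m y" using off_edge[OF True _ x] e xf by simp
    then show ?thesis using at_lip[OF p, of y] xf True unfolding Dc_def off_def by auto
  next
    case False
    then have "pos m y = nxN (4*m+5) (pos m x) \<or> pos m x = nxN (4*m+5) (pos m y)" using cyc_edge xf x y e by simp
    then show ?thesis using cd_lip[OF p pos_lt[of x m]] cd_lip[OF p pos_lt[of y m]] xf False x y
      unfolding Dc_def by auto
  qed
qed

lemma cd_tab: assumes "1 \<le> m" shows
  "cdN (4*m+5) 0 (4*m+4) = 1" "cdN (4*m+5) 0 (4*m+3) = 2" "cdN (4*m+5) 0 (4*m+2) = 3"
  "cdN (4*m+5) (4*m+4) 0 = 1" "cdN (4*m+5) (4*m+3) 0 = 2" "cdN (4*m+5) (4*m+2) 0 = 3"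
  "cdN (4*m+5) (4*m+4) (4*m+3) = 1" "cdN (4*m+5) (4*m+4) (4*m+2) = 2" "cdN (4*m+5) (4*m+3) (4*m+2) = 1"
  "cdN (4*m+5) (4*m+3) (4*m+4) = 1" "cdN (4*m+5) (4*m+2) (4*m+4) = 2" "cdN (4*m+5) (4*m+2) (4*m+3) = 1"
  "cdN (4*m+5) 0 0 = 0" "cdN (4*m+5) (4*m+4) (4*m+4) = 0" "cdN (4*m+5) (4*m+3) (4*m+3) = 0" "cdN (4*m+5) (4*m+2) (4*m+2) = 0"
  using assms unfolding cdN_def rr_def hh_def by auto

lemma cd_tab2: assumes "1 \<le> m" shows
  "cdN (4*m+5) 0 (Suc (Suc (4*m))) = 3" "cdN (4*m+5) (Suc (Suc (4*m))) 0 = 3"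
  "cdN (4*m+5) (4*m+4) (Suc (Suc (4*m))) = 2" "cdN (4*m+5) (4*m+3) (Suc (Suc (4*m))) = 1"
  "cdN (4*m+5) (Suc (Suc (4*m))) (4*m+4) = 2" "cdN (4*m+5) (Suc (Suc (4*m))) (4*m+3) = 1"
  "cdN (4*m+5) (Suc (Suc (4*m))) (Suc (Suc (4*m))) = 0"
  using assms unfolding cdN_def rr_def hh_def by auto

lemma off_lip: "k < 4 \<Longrightarrow> q < 4*m+5 \<Longrightarrow> off m k (nxN (4*m+5) q) \<le> off m k q + 1 \<and> off m k q \<le> off m k (nxN (4*m+5) q) + 1"
  using cd_lip1[of "at1 m k" "4*m+5" q] cd_lip1[of "at2 m k" "4*m+5" q] at_lt[of m k] unfolding off_def by auto

lemma Do_lip: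
  assumes m: "1 \<le> m" and k: "k < 4" and x: "x < 4*m+9" and y: "y < 4*m+9" and e: "ed m x y"
  shows "Do m k y \<le> Do m k x + 1 \<and> Do m k x \<le> Do m k y + 1"
proof (cases "x < 4")
  case True
  note xt = True
  show ?thesis
  proof (cases "y < 4")
    case True
    then have "y = Suc x" using offoff xt e by blast
    then show ?thesis using xt True unfolding Do_def by auto
  next
    case False
    then have "pos m y = at1 m x \<or> pos m y = at2 m x" using off_edge[OF xt _ y] e by simp
    moreover have "k = 0 \<or> k = 1 \<or> k = 2 \<or> k = 3" "x = 0 \<or> x = 1 \<or> x = 2 \<or> x = 3" using k xt by auto
    ultimately show ?thesis using xt False
      unfolding Do_def off_def at1_def at2_def by (auto simp: cd_tab[OF m] cd_tab2[OF m])
  qed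
next
  case False
  note xf = False
  show ?thesis
  proof (cases "y < 4")
    case True
    then have "pos m x = at1 m y \<or> pos m x = at2 m y" using off_edge[OF True _ x] e xf by simp
    moreover have "k = 0 \<or> k = 1 \<or> k = 2 \<or> k = 3" "y = 0 \<or> y = 1 \<or> y = 2 \<or> y = 3" using k True by auto
    ultimately show ?thesis using xf True
      unfolding Do_def off_def at1_def at2_def by (auto simp: cd_tab[OF m] cd_tab2[OF m])
  next
    case False
    then have "pos m y = nxN (4*m+5) (pos m x) \<or> pos m x = nxN (4*m+5) (pos m y)" using cyc_edge xf x y e by simp
    then show ?thesis using off_lip[OF k pos_lt[of x m]] off_lip[OF k pos_lt[of y m]] xf False x y
      unfolding Do_def by auto
  qed
qed

lemma Dc_desc:
  assumes p: "p < 4*m+5" and x: "x < 4*m+9" and pos: "0 < Dc m p x"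
  shows "\<exists>y<4*m+9. (ed m y x \<or> ed m x y) \<and> Dc m p y < Dc m p x"
proof (cases "x < 4")
  case True
  show ?thesis
  proof (cases "cdN (4*m+5) p (at1 m x) \<le> cdN (4*m+5) p (at2 m x)")
    case True
    let ?y = "vtx m (at1 m x)"
    have "Dc m p ?y = cdN (4*m+5) p (at1 m x)"
      using vtx_range[OF at_lt(1)[of m x]] pos_vtx[OF at_lt(1)[of m x]] unfolding Dc_def by auto
    moreover have "Dc m p x = cdN (4*m+5) p (at1 m x) + 1" using True \<open>x < 4\<close> unfolding Dc_def off_def by auto
    ultimately show ?thesis using off_adj(1)[OF \<open>x < 4\<close>, of m] vtx_range[OF at_lt(1)[of m x]] by (intro exI[of _ ?y]) auto
  next
    case False
    let ?y = "vtx m (at2 m x)"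
    have "Dc m p ?y = cdN (4*m+5) p (at2 m x)"
      using vtx_range[OF at_lt(2)[of m x]] pos_vtx[OF at_lt(2)[of m x]] unfolding Dc_def by auto
    moreover have "Dc m p x = cdN (4*m+5) p (at2 m x) + 1" using False \<open>x < 4\<close> unfolding Dc_def off_def by auto
    ultimately show ?thesis using off_adj(2)[OF \<open>x < 4\<close>, of m] vtx_range[OF at_lt(2)[of m x]] by (intro exI[of _ ?y]) auto
  qed
next
  case False
  define q where "q = pos m x"
  have q: "q < 4*m+5" using pos_lt[of x m] False x unfolding q_def by simp
  have xq: "vtx m q = x" using vtx_pos[of x m] False x unfolding q_def by simp
  have Dx: "Dc m p x = cdN (4*m+5) p q" using False unfolding Dc_def q_def by simp
  have "p \<noteq> q" using pos Dx cd_self[of "4*m+5" p] by auto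
  then have "cdN (4*m+5) p (nxN (4*m+5) q) < cdN (4*m+5) p q \<or> cdN (4*m+5) p (pvN (4*m+5) q) < cdN (4*m+5) p q"
    using cd_desc[OF p q] by simp
  then show ?thesis
  proof
    assume a: "cdN (4*m+5) p (nxN (4*m+5) q) < cdN (4*m+5) p q"
    let ?y = "vtx m (nxN (4*m+5) q)"
    have "Dc m p ?y = cdN (4*m+5) p (nxN (4*m+5) q)"
      using vtx_range[OF nx_lt[OF q]] pos_vtx[OF nx_lt[OF q]] unfolding Dc_def by auto
    then show ?thesis using a Dx adj_nx[OF q] xq vtx_range[OF nx_lt[OF q]] by (intro exI[of _ ?y]) auto
  next
    assume a: "cdN (4*m+5) p (pvN (4*m+5) q) < cdN (4*m+5) p q"
    let ?y = "vtx m (pvN (4*m+5) q)"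
    have "Dc m p ?y = cdN (4*m+5) p (pvN (4*m+5) q)"
      using vtx_range[OF pv_lt[OF q]] pos_vtx[OF pv_lt[OF q]] unfolding Dc_def by auto
    then show ?thesis using a Dx adj_nx[OF pv_lt[OF q]] nx_pv[OF q] xq vtx_range[OF pv_lt[OF q]]
      by (intro exI[of _ ?y]) auto
  qed
qed


lemma Do_desc:
  assumes k: "k < 4" and x: "x < 4*m+9" and pos: "0 < Do m k x"
  shows "\<exists>y<4*m+9. (ed m y x \<or> ed m x y) \<and> Do m k y < Do m k x"
proof (cases "x < 4")
  case True
  then have "k \<noteq> x" using pos unfolding Do_def by auto
  show ?thesis
  proof (cases "k < x")
    case True
    then have "ed m (x - 1) x" using offoff_adj[of "x - 1" m] \<open>x < 4\<close> by simp
    then show ?thesis using True \<open>x < 4\<close> unfolding Do_def by (intro exI[of _ "x - 1"]) auto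
  next
    case False
    then have "ed m x (Suc x)" using offoff_adj[of x m] \<open>x < 4\<close> \<open>k \<noteq> x\<close> k by simp
    then show ?thesis using False \<open>x < 4\<close> \<open>k \<noteq> x\<close> k unfolding Do_def by (intro exI[of _ "Suc x"]) auto
  qed
next
  case False
  define q where "q = pos m x"
  have q: "q < 4*m+5" using pos_lt[of x m] False x unfolding q_def by simp
  have xq: "vtx m q = x" using vtx_pos[of x m] False x unfolding q_def by simp
  have Dx: "Do m k x = off m k q" using False unfolding Do_def q_def by simp
  have D0: "Do m k k = 0" unfolding Do_def using k by simp
  have "off m k q = cdN (4*m+5) q (at1 m k) + 1 \<or> off m k q = cdN (4*m+5) q (at2 m k) + 1"
    unfolding off_def min_def by simp
  then obtain a where a: "a = at1 m k \<or> a = at2 m k" and amin: "off m k q = cdN (4*m+5) q a + 1"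
    by blast
  have alt: "a < 4*m+5" using a at_lt[of m k] by auto
  show ?thesis
  proof (cases "q = a")
    case True
    have "ed m k x \<or> ed m x k" using a off_adj[OF k, of m] xq True by auto
    then show ?thesis using D0 Dx amin k by (intro exI[of _ k]) auto
  next
    case False
    have symq: "cdN (4*m+5) q a = cdN (4*m+5) a q" using cd_sym[OF q alt] .
    have "cdN (4*m+5) a (nxN (4*m+5) q) < cdN (4*m+5) a q \<or> cdN (4*m+5) a (pvN (4*m+5) q) < cdN (4*m+5) a q"
      using cd_desc[OF alt q] False by simp
    moreover have "ed m (vtx m (nxN (4*m+5) q)) x \<or> ed m x (vtx m (nxN (4*m+5) q))"
      using adj_nx[OF q] xq by auto
    moreover have "ed m (vtx m (pvN (4*m+5) q)) x \<or> ed m x (vtx m (pvN (4*m+5) q))"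
      using adj_nx[OF pv_lt[OF q]] nx_pv[OF q] xq by auto
    ultimately obtain q' where q': "q' < 4*m+5" "cdN (4*m+5) a q' < cdN (4*m+5) a q"
      and adj: "ed m (vtx m q') x \<or> ed m x (vtx m q')"
      using nx_lt[OF q] pv_lt[OF q] by blast
    have "off m k q' \<le> cdN (4*m+5) q' a + 1" using a unfolding off_def by auto
    also have "\<dots> = cdN (4*m+5) a q' + 1" using cd_sym[OF q'(1) alt] by simp
    finally have "off m k q' < off m k q" using q'(2) amin symq by simp
    moreover have "Do m k (vtx m q') = off m k q'"
      using vtx_range[OF q'(1)] pos_vtx[OF q'(1)] unfolding Do_def by auto
    ultimately show ?thesis using Dx adj vtx_range[OF q'(1)] by (intro exI[of _ "vtx m q'"]) auto
  qed
qed

lemma DD_lip: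
  assumes m: "1 \<le> m" and u: "u < 4*m+9" and x: "x < 4*m+9" and y: "y < 4*m+9"
    and e: "calG2_adj (4*m+1) x y"
  shows "DD m u y \<le> DD m u x + 1"
proof -
  have e': "ed m x y \<or> ed m y x" using e adj_iff by blast
  show ?thesis
  proof (cases "u < 4")
    case True
    then show ?thesis using e' Do_lip[OF m True x y] Do_lip[OF m True y x] unfolding DD_def by auto
  next
    case False
    have p: "pos m u < 4*m+5" using pos_lt[of u m] False u by simp
    show ?thesis using e' Dc_lip[OF p x y] Dc_lip[OF p y x] False unfolding DD_def by auto
  qed
qed

lemma DD_desc:
  assumes u: "u < 4*m+9" and x: "x < 4*m+9" and pos: "0 < DD m u x"
  shows "\<exists>y<4*m+9. calG2_adj (4*m+1) y x \<and> DD m u y < DD m u x"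
proof (cases "u < 4")
  case True
  then show ?thesis using Do_desc[OF True x] pos adj_iff unfolding DD_def by auto
next
  case False
  have p: "pos m u < 4*m+5" using pos_lt[of u m] False u by simp
  show ?thesis using Dc_desc[OF p x] pos False adj_iff unfolding DD_def by auto
qed

lemma DD_self: "u < 4*m+9 \<Longrightarrow> DD m u u = 0"
  unfolding DD_def Do_def Dc_def by (auto simp: cd_self)

lemma DD_zero:
  assumes u: "u < 4*m+9" and x: "x < 4*m+9" and z: "DD m u x = 0"
  shows "x = u"
proof (cases "u < 4")
  case True
  then show ?thesis using z unfolding DD_def Do_def off_def by (auto split: if_splits)
next
  case False
  have p: "pos m u < 4*m+5" using pos_lt[of u m] False u by simp
  show ?thesis
  proof (cases "x < 4")
    case True then show ?thesis using z False unfolding DD_def Dc_def off_def by auto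
  next
    case xf: False
    have "pos m u = pos m x" using z False xf cd_zero[OF p pos_lt[of x m]] x unfolding DD_def Dc_def by auto
    then show ?thesis using vtx_pos[of x m] vtx_pos[of u m] u x False xf by (metis not_less)
  qed
qed

lemma V_eq: "calG2_V (4*m+1) = {..<4*m+9}" unfolding calG2_V_def by auto

lemma gdist_DD:
  assumes m: "1 \<le> m" and u: "u < 4*m+9" and v: "v < 4*m+9"
  shows "gdist (calG2_V (4*m+1)) (calG2_adj (4*m+1)) u v = DD m u v"
proof (rule gdist_eqI[where D = "DD m u"])
  show "u \<in> calG2_V (4*m+1)" "v \<in> calG2_V (4*m+1)" using u v unfolding V_eq by auto
  show "DD m u u = 0" using DD_self[OF u] .
  fix x assume "x \<in> calG2_V (4*m+1)" "DD m u x = 0"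
  then show "x = u" using DD_zero[OF u] unfolding V_eq by auto
next
  fix x y assume "x \<in> calG2_V (4*m+1)" "y \<in> calG2_V (4*m+1)" "calG2_adj (4*m+1) x y"
  then show "DD m u y \<le> DD m u x + 1" using DD_lip[OF m u] unfolding V_eq by auto
next
  fix x assume "x \<in> calG2_V (4*m+1)" "0 < DD m u x"
  then obtain y where "y < 4*m+9" "calG2_adj (4*m+1) y x" "DD m u y < DD m u x"
    using DD_desc[OF u, of x] unfolding V_eq by auto
  then show "\<exists>y\<in>calG2_V (4*m+1). calG2_adj (4*m+1) y x \<and> DD m u y < DD m u x"
    unfolding V_eq by auto
qed


lemma sum_V: "(\<Sum>v<4*m+9. f v) = (\<Sum>v<4. f v) + (\<Sum>q<4*m+5. f (vtx m q))"
proof -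
  have "{..<4*m+9} = {..<4} \<union> {4..<4*m+9}" by auto
  then have "(\<Sum>v<4*m+9. f v) = (\<Sum>v<4. f v) + (\<Sum>v\<in>{4..<4*m+9}. f v)"
    using sum.union_disjoint[of "{..<4}" "{4..<4*m+9}" f] by (simp add: ivl_disj_int)
  also have "(\<Sum>v\<in>{4..<4*m+9}. f v) = (\<Sum>q<4*m+5. f (vtx m q))"
    by (rule sum.reindex_bij_witness[where i = "vtx m" and j = "pos m"])
       (auto simp: vtx_pos pos_vtx pos_lt vtx_range)
  finally show ?thesis .
qed

lemma e1: "2*(2*m+2)+1 = 4*m+(5::nat)" by simp
lemma e2: "2*m+2+1 = 2*m+(3::nat)" by simp

lemma sum_cd: "p < 4*m+5 \<Longrightarrow> (\<Sum>q<4*m+5. cdN (4*m+5) p q) = (2*m+2)*(2*m+3)"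
proof -
  assume p: "p < 4*m+5"
  have "(\<Sum>q<4*m+5. cdN (4*m+5) p q) = (\<Sum>q<4*m+5. hh (4*m+5) (rr (4*m+5) p q))"
    unfolding cdN_def ..
  also have "\<dots> = (\<Sum>r<4*m+5. hh (4*m+5) r)" using sum_rr[OF p] .
  also have "\<dots> = (2*m+2)*(2*m+3)" using sum_hh[of "2*m+2"] unfolding e1 e2 .
  finally show ?thesis .
qed

lemma sum_cd1: "a < 4*m+5 \<Longrightarrow> (\<Sum>q<4*m+5. cdN (4*m+5) q a) = (2*m+2)*(2*m+3)"
  using sum_cd[of a m] cd_sym[of _ "4*m+5" a] by (metis (no_types, lifting) lessThan_iff sum.cong)

lemma sum_cd2: assumes a: "a < 4*m+5"
  shows "(\<Sum>q<4*m+5. min (cdN (4*m+5) q (nxN (4*m+5) a)) (cdN (4*m+5) q a)) = (2*m+2)*(2*m+2)"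
proof -
  have "(\<Sum>q<4*m+5. min (cdN (4*m+5) q (nxN (4*m+5) a)) (cdN (4*m+5) q a))
      = (\<Sum>q<4*m+5. (\<lambda>r. min (hh (4*m+5) r) (hh (4*m+5) (pvN (4*m+5) r))) (rr (4*m+5) a q))"
  proof (rule sum.cong)
    fix q assume "q \<in> {..<4*m+5}"
    then have q: "q < 4*m+5" by simp
    have "cdN (4*m+5) q (nxN (4*m+5) a) = hh (4*m+5) (pvN (4*m+5) (rr (4*m+5) a q))"
      using cd_sym[OF q nx_lt[OF a]] rr_nx1[OF a q] unfolding cdN_def by simp
    moreover have "cdN (4*m+5) q a = hh (4*m+5) (rr (4*m+5) a q)"
      using cd_sym[OF q a] unfolding cdN_def by simp
    ultimately show "min (cdN (4*m+5) q (nxN (4*m+5) a)) (cdN (4*m+5) q a) =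
       (\<lambda>r. min (hh (4*m+5) r) (hh (4*m+5) (pvN (4*m+5) r))) (rr (4*m+5) a q)"
      by (simp add: min.commute)
  qed simp
  also have "\<dots> = (\<Sum>r<4*m+5. min (hh (4*m+5) r) (hh (4*m+5) (pvN (4*m+5) r)))"
    using sum_rr[OF a] .
  also have "\<dots> = (2*m+2)*(2*m+2)" using sum_hh2[of "2*m+2"] unfolding e1 .
  finally show ?thesis .
qed


definition Gv :: "nat \<Rightarrow> nat \<Rightarrow> nat" where
  "Gv m p = (if p = 0 then 6 else if p = 4*m+4 then 3 else if p = 4*m+3 then 2 else if p = 4*m+2 then 4
     else if p < 2*m then 4*p+6 else if p = 2*m then 8*m+5 else if p = 2*m+1 then 8*m+6
     else if p = 2*m+2 then 8*m+4 else 16*m+12-4*p)"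

lemma cdv1: "1 \<le> p \<Longrightarrow> p < 2*m \<Longrightarrow> cdN (4*m+5) p 0 = p \<and> cdN (4*m+5) p (4*m+4) = p+1 \<and>
  cdN (4*m+5) p (4*m+3) = p+2 \<and> cdN (4*m+5) p (4*m+2) = p+3"
  unfolding cdN_def rr_def hh_def by auto
lemma cdv2: "p = 2*m \<Longrightarrow> cdN (4*m+5) p 0 = 2*m \<and> cdN (4*m+5) p (4*m+4) = 2*m+1 \<and>
  cdN (4*m+5) p (4*m+3) = 2*m+2 \<and> cdN (4*m+5) p (4*m+2) = 2*m+2"
  unfolding cdN_def rr_def hh_def by auto
lemma cdv3: "p = 2*m+1 \<Longrightarrow> cdN (4*m+5) p 0 = 2*m+1 \<and> cdN (4*m+5) p (4*m+4) = 2*m+2 \<and>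
  cdN (4*m+5) p (4*m+3) = 2*m+2 \<and> cdN (4*m+5) p (4*m+2) = 2*m+1"
  unfolding cdN_def rr_def hh_def by auto
lemma cdv4: "p = 2*m+2 \<Longrightarrow> cdN (4*m+5) p 0 = 2*m+2 \<and> cdN (4*m+5) p (4*m+4) = 2*m+2 \<and>
  cdN (4*m+5) p (4*m+3) = 2*m+1 \<and> cdN (4*m+5) p (4*m+2) = 2*m"
  unfolding cdN_def rr_def hh_def by auto
lemma cdv5: "2*m+3 \<le> p \<Longrightarrow> p \<le> 4*m+1 \<Longrightarrow> cdN (4*m+5) p 0 = 4*m+5-p \<and> cdN (4*m+5) p (4*m+4) = 4*m+4-p \<and>
  cdN (4*m+5) p (4*m+3) = 4*m+3-p \<and> cdN (4*m+5) p (4*m+2) = 4*m+2-p"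
  unfolding cdN_def rr_def hh_def by auto

lemma offsum: assumes m: "1 \<le> m" and p: "p < 4*m+5"
  shows "off m 0 p + off m 1 p + off m 2 p + off m 3 p = Gv m p + 4"
proof -
  have e: "off m 0 p + off m 1 p + off m 2 p + off m 3 p =
    min (cdN (4*m+5) p 0) (cdN (4*m+5) p (4*m+4)) + min (cdN (4*m+5) p (4*m+4)) (cdN (4*m+5) p (4*m+3))
    + cdN (4*m+5) p (4*m+3) + cdN (4*m+5) p (4*m+2) + 4"
    unfolding off_def at1_def at2_def by simp
  consider "p = 0" | "p = 4*m+4" | "p = 4*m+3" | "p = 4*m+2" | "1 \<le> p \<and> p < 2*m" | "p = 2*m"
    | "p = 2*m+1" | "p = 2*m+2" | "2*m+3 \<le> p \<and> p \<le> 4*m+1" using p by linarith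
  then show ?thesis
  proof cases
    case 1 then show ?thesis unfolding e Gv_def using cd_tab[OF m] by simp
  next
    case 2 then show ?thesis unfolding e Gv_def using cd_tab[OF m] by simp
  next
    case 3 then show ?thesis unfolding e Gv_def using cd_tab[OF m] by simp
  next
    case 4 then show ?thesis unfolding e Gv_def using cd_tab[OF m] by simp
  next
    case 5 then show ?thesis unfolding e Gv_def using cdv1[of p m] by simp
  next
    case 6 then show ?thesis unfolding e Gv_def using cdv2[of p m] m by simp
  next
    case 7 then show ?thesis unfolding e Gv_def using cdv3[of p m] m by simp
  next
    case 8 then show ?thesis unfolding e Gv_def using cdv4[of p m] m by simp
  next
    case 9
    then have c: "cdN (4*m+5) p 0 = 4*m+5-p \<and> cdN (4*m+5) p (4*m+4) = 4*m+4-p \<and>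
      cdN (4*m+5) p (4*m+3) = 4*m+3-p \<and> cdN (4*m+5) p (4*m+2) = 4*m+2-p" using cdv5[of m p] by blast
    have "Gv m p = 16*m+12-4*p" unfolding Gv_def using 9 by auto
    then show ?thesis unfolding e using c 9 by (simp add: min_def; arith)
  qed
qed

definition Gq :: "nat \<Rightarrow> nat \<Rightarrow> nat" where
  "Gq m p = (if p = 0 then 1 else if p = 4*m+4 then 0 else if p = 4*m+3 then 0 else if p = 4*m+2 then 1
     else if p < 2*m then p+1 else if p = 2*m then 2*m+1 else if p = 2*m+1 then 2*m+1
     else if p = 2*m+2 then 2*m+1 else 4*m+3-p)"
definition Gr :: "nat \<Rightarrow> nat \<Rightarrow> nat" where
  "Gr m p = (if p = 0 then 2 else if p = 4*m+4 then 3 else if p = 4*m+3 then 2 else if p = 4*m+2 then 0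
     else if p < 2*m then 2 else if p = 2*m then 1 else if p = 2*m+1 then 2
     else if p = 2*m+2 then 0 else 0)"

lemma Gv_qr: "Gv m p = 4 * Gq m p + Gr m p"
  unfolding Gv_def Gq_def Gr_def by auto
lemma Gr_lt: "Gr m p < 4" unfolding Gr_def by auto

lemma qr_uniq: "(r::nat) < 4 \<Longrightarrow> r' < 4 \<Longrightarrow> 4*a + r = 4*b + r' \<Longrightarrow> a = b \<and> r = r'"
  by presburger

definition Ginv :: "nat \<Rightarrow> nat \<Rightarrow> nat \<Rightarrow> nat" where
  "Ginv m q r = (if r = 3 then 4*m+4 else if r = 1 then 2*m else if r = 2 then
      (if q = 1 then 0 else if q = 0 then 4*m+3 else if q = 2*m+1 then 2*m+1 else q - 1)
    else (if q = 1 then 4*m+2 else if q = 2*m+1 then 2*m+2 else 4*m+3-q))"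

lemma Ginv_eq: assumes m: "1 \<le> m" and p: "p < 4*m+5" shows "Ginv m (Gq m p) (Gr m p) = p"
proof -
  consider "p = 0" | "p = 4*m+4" | "p = 4*m+3" | "p = 4*m+2" | "1 \<le> p \<and> p < 2*m" | "p = 2*m"
    | "p = 2*m+1" | "p = 2*m+2" | "2*m+3 \<le> p \<and> p \<le> 4*m+1" using p by linarith
  then show ?thesis
  proof cases
    case 1 then show ?thesis unfolding Ginv_def Gq_def Gr_def using m by simp
  next
    case 2 then show ?thesis unfolding Ginv_def Gq_def Gr_def using m by simp
  next
    case 3 then show ?thesis unfolding Ginv_def Gq_def Gr_def using m by simp
  next
    case 4 then show ?thesis unfolding Ginv_def Gq_def Gr_def using m by simp
  next
    case 5
    then have "Gq m p = p+1" "Gr m p = 2" unfolding Gq_def Gr_def by auto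
    then show ?thesis unfolding Ginv_def using 5 by simp
  next
    case 6 then show ?thesis unfolding Ginv_def Gq_def Gr_def using m by simp
  next
    case 7 then show ?thesis unfolding Ginv_def Gq_def Gr_def using m by simp
  next
    case 8 then show ?thesis unfolding Ginv_def Gq_def Gr_def using m by simp
  next
    case 9
    then have "Gq m p = 4*m+3-p" "Gr m p = 0" unfolding Gq_def Gr_def by auto
    then show ?thesis unfolding Ginv_def using 9 by (simp; arith)
  qed
qed

lemma Gv_inj: assumes m: "1 \<le> m" and p: "p < 4*m+5" and p': "p' < 4*m+5" and e: "Gv m p = Gv m p'"
  shows "p = p'"
proof -
  have "Gq m p = Gq m p' \<and> Gr m p = Gr m p'"
    using qr_uniq[OF Gr_lt Gr_lt] e unfolding Gv_qr by blast
  then show ?thesis using Ginv_eq[OF m p] Ginv_eq[OF m p'] by metis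
qed

lemma Gv_ne: assumes m: "1 \<le> m" and p: "p < 4*m+5"
  shows "Gv m p \<noteq> 2*m+5 \<and> Gv m p \<noteq> 2*m+3 \<and> Gv m p \<noteq> 4*m+5 \<and> Gv m p \<noteq> 4*m+7"
proof -
  have r: "Gr m p = 2 \<or> Gr m p = 0 \<or> (Gr m p = 3 \<and> Gq m p = 0) \<or> (Gr m p = 1 \<and> Gq m p = 2*m+1)"
    unfolding Gq_def Gr_def by auto
  have odd: "4*a + 2 \<noteq> 2*m+5" "4*a \<noteq> 2*m+5" "4*a + 2 \<noteq> 2*m+3" "4*a \<noteq> 2*m+3"
     "4*a + 2 \<noteq> 4*m+5" "4*a \<noteq> 4*m+5" "4*a + 2 \<noteq> 4*m+7" "4*a \<noteq> 4*m+7" for a :: nat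
    by presburger+
  show ?thesis using r odd[of "Gq m p"] m unfolding Gv_qr by auto
qed


definition TrV :: "nat \<Rightarrow> nat \<Rightarrow> nat" where
  "TrV m u = (if u = 0 then (2*m+2)*(2*m+2)+4*m+11 else if u = 1 then (2*m+2)*(2*m+2)+4*m+9
     else if u = 2 then (2*m+2)*(2*m+2)+6*m+11 else if u = 3 then (2*m+2)*(2*m+2)+6*m+13
     else (2*m+2)*(2*m+2)+2*m+6+Gv m (pos m u))"

lemma tr_sum: assumes m: "1 \<le> m" and u: "u < 4*m+9"
  shows "transmission (calG2_V (4*m+1)) (calG2_adj (4*m+1)) u = (\<Sum>v<4*m+9. DD m u v)"
proof -
  have "transmission (calG2_V (4*m+1)) (calG2_adj (4*m+1)) u = (\<Sum>v\<in>calG2_V (4*m+1). DD m u v)"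
    unfolding transmission_def
  proof (rule sum.cong[OF refl])
    fix x assume "x \<in> calG2_V (4*m+1)"
    then have "x < 4*m+9" unfolding V_eq by simp
    then show "gdist (calG2_V (4*m+1)) (calG2_adj (4*m+1)) u x = DD m u x" using gdist_DD[OF m u] by simp
  qed
  then show ?thesis unfolding V_eq .
qed

lemma sum4: "(\<Sum>v<(4::nat). f v) = f 0 + f 1 + f 2 + (f 3 :: nat)"
  by (simp add: eval_nat_numeral)

lemma sum_plus1: "(\<Sum>q<n. f q + 1) = (\<Sum>q<n. f q) + (n::nat)"
  by (simp only: sum.distrib) simp

lemma tr_val: assumes m: "1 \<le> m" and u: "u < 4*m+9"
  shows "transmission (calG2_V (4*m+1)) (calG2_adj (4*m+1)) u = TrV m u"
proof -
  have T: "transmission (calG2_V (4*m+1)) (calG2_adj (4*m+1)) u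
      = (\<Sum>v<4. DD m u v) + (\<Sum>q<4*m+5. DD m u (vtx m q))"
    using tr_sum[OF m u] sum_V[where m=m and f="DD m u"] by simp
  show ?thesis
  proof (cases "u < 4")
    case True
    have A: "(\<Sum>q<4*m+5. DD m u (vtx m q)) = (\<Sum>q<4*m+5. off m u q)"
    proof (rule sum.cong[OF refl])
      fix q assume "q \<in> {..<4*m+5}"
      then have q: "q < 4*m+5" by simp
      show "DD m u (vtx m q) = off m u q" using vtx_range[OF q] pos_vtx[OF q] True by (simp add: DD_def Do_def)
    qed
    have B: "(\<Sum>v<4. DD m u v) = (if u = 0 then 6 else if u = 1 then 4 else if u = 2 then 4 else 6)"
      unfolding sum4 using True by (auto simp: DD_def Do_def)
    have o0: "(\<Sum>q<4*m+5. off m 0 q) = (2*m+2)*(2*m+2) + (4*m+5)"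
    proof -
      have "(\<Sum>q<4*m+5. off m 0 q) = (\<Sum>q<4*m+5. min (cdN (4*m+5) q (nxN (4*m+5) (4*m+4))) (cdN (4*m+5) q (4*m+4)) + 1)"
        unfolding off_def at1_def at2_def nx_vals by simp
      also have "\<dots> = (2*m+2)*(2*m+2) + (4*m+5)" unfolding sum_plus1 using sum_cd2[of "4*m+4" m] by simp
      finally show ?thesis .
    qed
    have o1: "(\<Sum>q<4*m+5. off m 1 q) = (2*m+2)*(2*m+2) + (4*m+5)"
    proof -
      have "(\<Sum>q<4*m+5. off m 1 q) = (\<Sum>q<4*m+5. min (cdN (4*m+5) q (nxN (4*m+5) (4*m+3))) (cdN (4*m+5) q (4*m+3)) + 1)"
        unfolding off_def at1_def at2_def nx_vals by simp
      also have "\<dots> = (2*m+2)*(2*m+2) + (4*m+5)" unfolding sum_plus1 using sum_cd2[of "4*m+3" m] by simp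
      finally show ?thesis .
    qed
    have o2: "(\<Sum>q<4*m+5. off m 2 q) = (2*m+2)*(2*m+3) + (4*m+5)"
    proof -
      have "(\<Sum>q<4*m+5. off m 2 q) = (\<Sum>q<4*m+5. cdN (4*m+5) q (4*m+3) + 1)"
        unfolding off_def at1_def at2_def by simp
      also have "\<dots> = (2*m+2)*(2*m+3) + (4*m+5)" unfolding sum_plus1 using sum_cd1[of "4*m+3" m] by simp
      finally show ?thesis .
    qed
    have o3: "(\<Sum>q<4*m+5. off m 3 q) = (2*m+2)*(2*m+3) + (4*m+5)"
    proof -
      have "(\<Sum>q<4*m+5. off m 3 q) = (\<Sum>q<4*m+5. cdN (4*m+5) q (4*m+2) + 1)"
        unfolding off_def at1_def at2_def by simp
      also have "\<dots> = (2*m+2)*(2*m+3) + (4*m+5)" unfolding sum_plus1 using sum_cd1[of "4*m+2" m] by simp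
      finally show ?thesis .
    qed
    have "u = 0 \<or> u = 1 \<or> u = 2 \<or> u = 3" using True by auto
    then show ?thesis unfolding T A B TrV_def using o0 o1 o2 o3 by (auto simp: algebra_simps)
  next
    case False
    define p where "p = pos m u"
    have p: "p < 4*m+5" using pos_lt[of u m] False u unfolding p_def by simp
    have A: "(\<Sum>q<4*m+5. DD m u (vtx m q)) = (\<Sum>q<4*m+5. cdN (4*m+5) p q)"
    proof (rule sum.cong[OF refl])
      fix q assume "q \<in> {..<4*m+5}"
      then have q: "q < 4*m+5" by simp
      show "DD m u (vtx m q) = cdN (4*m+5) p q" using vtx_range[OF q] pos_vtx[OF q] False by (simp add: DD_def Dc_def p_def)
    qed
    have B: "(\<Sum>v<4. DD m u v) = Gv m p + 4"
      unfolding sum4 using False offsum[OF m p] by (simp add: DD_def Dc_def p_def)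
    show ?thesis unfolding T A B TrV_def sum_cd[OF p] using False by (simp add: p_def algebra_simps)
  qed
qed

lemma TrV_inj: assumes m: "1 \<le> m" and u: "u < 4*m+9" and v: "v < 4*m+9" and e: "TrV m u = TrV m v"
  shows "u = v"
proof (cases "u < 4")
  case True
  note ut = True
  show ?thesis
  proof (cases "v < 4")
    case True
    have "u = 0 \<or> u = 1 \<or> u = 2 \<or> u = 3" "v = 0 \<or> v = 1 \<or> v = 2 \<or> v = 3" using ut True by auto
    then show ?thesis using e m unfolding TrV_def by auto
  next
    case False
    have "pos m v < 4*m+5" using pos_lt[of v m] False v by simp
    from Gv_ne[OF m this] have "u = 0 \<or> u = 1 \<or> u = 2 \<or> u = 3" using ut by auto
    then show ?thesis using e False Gv_ne[OF m \<open>pos m v < 4*m+5\<close>] unfolding TrV_def by auto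
  qed
next
  case False
  note uf = False
  have pu: "pos m u < 4*m+5" using pos_lt[of u m] False u by simp
  show ?thesis
  proof (cases "v < 4")
    case True
    have "v = 0 \<or> v = 1 \<or> v = 2 \<or> v = 3" using True by auto
    then show ?thesis using e uf Gv_ne[OF m pu] unfolding TrV_def by auto
  next
    case False
    have pv: "pos m v < 4*m+5" using pos_lt[of v m] False v by simp
    have "Gv m (pos m u) = Gv m (pos m v)" using e uf False unfolding TrV_def by simp
    then have "pos m u = pos m v" using Gv_inj[OF m pu pv] by simp
    then show ?thesis using vtx_pos[of u m] vtx_pos[of v m] u v uf False by (metis not_less)
  qed
qed

theorem proposition2:
  fixes m :: nat
  assumes "m \<ge> 1"
  shows "transmission_irregular (calG2_V (4 * m + 1)) (calG2_adj (4 * m + 1))"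
  unfolding transmission_irregular_def
proof (rule inj_onI)
  fix u v assume u: "u \<in> calG2_V (4*m+1)" and v: "v \<in> calG2_V (4*m+1)"
    and e: "transmission (calG2_V (4*m+1)) (calG2_adj (4*m+1)) u = transmission (calG2_V (4*m+1)) (calG2_adj (4*m+1)) v"
  have u': "u < 4*m+9" and v': "v < 4*m+9" using u v unfolding V_eq by auto
  show "u = v" using TrV_inj[OF assms u' v'] e tr_val[OF assms u'] tr_val[OF assms v'] by simp
qed


end
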